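(* Consider the stochastic extra-momentum scheme (defined in the context) with non-negative parameters $\alpha,\gamma,\tau$ satisfying, for some constant $\theta\in(0,1]$, $$1+\alpha\mu-\gamma\ge1+\frac{\theta}{\kappa},\qquad\frac{\alpha}{\tau}=1+\frac{\theta}{\kappa},\qquad\frac{1}{8\tau^2L^2+2\gamma}\ge1+\frac{\theta}{\kappa}.$$ Then for every $k\ge0$, $$\mathbb E\big[\|z^k-z^*\|^2\big]\le2\Big(1+\frac{\theta}{\kappa}\Big)^{-k}\|z^0-z^*\|^2+\Big(\frac{\kappa}{\theta}+1\Big)\cdot32\tau^2\sigma^2+\frac{2\kappa\alpha\delta^2}{\theta\mu}.$$
   Context: Let $\mathcal Z\subseteq\mathbb R^n$ be a nonempty closed convex set. Let $F:\mathcal Z\to\mathbb R^n$ satisfy $(F(z)-F(z'))^\top(z-z')\ge\mu\|z-z'\|^2$ and $\|F(z)-F(z')\|\le L\|z-z'\|$ for all $z,z'\in\mathcal Z$, where $0<\mu\le L$; $\kappa=L/\mu$. Let $z^*$ be the unique point of $\mathcal Z$ with $F(z^* )^\top(z-z^* )\ge 0$ for all $z\in\mathcal Z$. $P_{\mathcal Z}$ denotes Euclidean projection onto $\mathcal Z$. A stochastic oracle returns $\hat F(z,\xi)$ for a random sample $\xi$, and satisfies, for every $z\in\mathcal Z$, $\mathbb E_\xi\|\hat F(z,\xi)-F(z)\|\le\delta$ and $\mathbb E_\xi\|\hat F(z,\xi)-F(z)\|^2\le\sigma^2$ for constants $\delta,\sigma\ge0$. Each oracle call $\hat F(z^j)$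 means $\hat F(z^j,\xi^j)$ with a fresh sample independent of all previous samples. The stochastic extra-momentum scheme: starting from $z^0\in\mathcal Z$ with $z^{-1}:=z^0$ and $\hat F(z^{-1}):=\hat F(z^0)$, for $k\ge0$, $z^{k+1}=P_{\mathcal Z}(z^k-\alpha\hat F(z^k)+\gamma(z^k-z^{k-1})-\tau(\hat F(z^k)-\hat F(z^{k-1})))$. *)

theory Defs
  imports "HOL-Analysis.Analysis" "HOL-Probability.Probability"
begin

text \<open>Iterates of the stochastic extra-momentum scheme along a sample path
  \<omega> :: nat \<Rightarrow> 'b, where \<omega> j is the fresh sample used by the oracle call at z^j.
  em_iter ... k = (z^k, z^(k-1)), with z^(-1) = z^0 and Fhat(z^(-1)) = Fhat(z^0) (same sample).\<close>

fun em_iter :: "'a::euclidean_space set \<Rightarrow> ('a \<Rightarrow> 'b \<Rightarrow> 'a) \<Rightarrow> real \<Rightarrow> real \<Rightarrow> real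
    \<Rightarrow> 'a \<Rightarrow> (nat \<Rightarrow> 'b) \<Rightarrow> nat \<Rightarrow> 'a \<times> 'a" where
  "em_iter Z Fh \<alpha> \<gamma> \<tau> z0 \<omega> 0 = (z0, z0)"
| "em_iter Z Fh \<alpha> \<gamma> \<tau> z0 \<omega> (Suc k) =
     (let (zk, zkm) = em_iter Z Fh \<alpha> \<gamma> \<tau> z0 \<omega> k;
          gk = Fh zk (\<omega> k);
          gkm = (if k = 0 then Fh zk (\<omega> 0) else Fh zkm (\<omega> (k - 1)))
      in (closest_point Z (zk - \<alpha> *\<^sub>R gk + \<gamma> *\<^sub>R (zk - zkm) - \<tau> *\<^sub>R (gk - gkm)), zk))"

definition em_z :: "'a::euclidean_space set \<Rightarrow> ('a \<Rightarrow> 'b \<Rightarrow> 'a) \<Rightarrow> real \<Rightarrow> real \<Rightarrow> real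
    \<Rightarrow> 'a \<Rightarrow> nat \<Rightarrow> (nat \<Rightarrow> 'b) \<Rightarrow> 'a" where
  "em_z Z Fh \<alpha> \<gamma> \<tau> z0 k \<omega> = fst (em_iter Z Fh \<alpha> \<gamma> \<tau> z0 \<omega> k)"

end

theory Submission
  imports Defs
begin


lemma norm_add_sq: "(norm (a + b :: 'a::real_inner))\<^sup>2 = (norm a)\<^sup>2 + 2 * (a \<bullet> b) + (norm b)\<^sup>2"
  by (simp add: power2_norm_eq_inner inner_add_left inner_add_right inner_commute)

lemma norm_diff_sq: "(norm (a - b :: 'a::real_inner))\<^sup>2 = (norm a)\<^sup>2 - 2 * (a \<bullet> b) + (norm b)\<^sup>2"
  by (simp add: power2_norm_eq_inner inner_diff_left inner_diff_right inner_commute)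

lemma norm_scale_sq: "(norm (c *\<^sub>R b :: 'a::real_normed_vector))\<^sup>2 = c\<^sup>2 * (norm b)\<^sup>2"
  by (simp add: power_mult_distrib)

locale emsetup =
  fixes Z :: "'a::euclidean_space set" and F :: "'a \<Rightarrow> 'a"
    and mu L al ga tau rho :: real and zs :: 'a
  assumes Zc: "closed Z" and Zv: "convex Z" and Zne: "Z \<noteq> {}"
    and mu: "0 < mu"
    and strmon: "\<forall>z\<in>Z. \<forall>z'\<in>Z. (F z - F z') \<bullet> (z - z') \<ge> mu * (norm (z - z'))\<^sup>2"
    and lip: "\<forall>z\<in>Z. \<forall>z'\<in>Z. norm (F z - F z') \<le> L * norm (z - z')"
    and zsZ: "zs \<in> Z" and sol: "\<forall>z\<in>Z. F zs \<bullet> (z - zs) \<ge> 0"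
    and tau: "0 < tau" and rho: "1 < rho" and al: "al = rho * tau" and ga: "0 \<le> ga"
    and C1: "1 + al * mu - ga \<ge> rho"
    and C2: "8 * tau\<^sup>2 * L\<^sup>2 + 2 * ga \<le> 1 / rho"
begin

definition step :: "'a \<Rightarrow> 'a \<Rightarrow> 'a \<Rightarrow> 'a \<Rightarrow> 'a" where
  "step z zm g gm = closest_point Z (z - al *\<^sub>R g + ga *\<^sub>R (z - zm) - tau *\<^sub>R (g - gm))"

definition Psi :: "'a \<Rightarrow> 'a \<Rightarrow> 'a \<Rightarrow> real" where
  "Psi zn z g = (norm (zn - zs))\<^sup>2 - 2 * tau * ((F zn - g) \<bullet> (zn - zs)) + (norm (zn - z))\<^sup>2 / (2 * rho)"

definition Phi :: "'a \<Rightarrow> 'a \<Rightarrow> 'a \<Rightarrow> real" where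
  "Phi zn z g = Psi zn z g + tau * mu * (norm (zn - zs))\<^sup>2 + 4 * tau\<^sup>2 * (norm (g - F z))\<^sup>2"

lemma C2': "4 * tau\<^sup>2 * L\<^sup>2 + ga \<le> 1 / (2 * rho)"
  using C2 by (simp add: field_simps)

lemma main_step:
  assumes z: "z \<in> Z" and zm: "zm \<in> Z"
  shows "rho * Psi (step z zm g gm) z g + al * mu * (norm (step z zm g gm - zs))\<^sup>2
     \<le> Psi z zm gm - 2 * tau * ((g - F z) \<bullet> (z - zs)) + 2 * tau\<^sup>2 * (norm (g - gm))\<^sup>2
        - 4 * tau\<^sup>2 * L\<^sup>2 * (norm (z - zm))\<^sup>2"
proof -
  define zn where "zn = step z zm g gm"
  define x where "x = z - al *\<^sub>R g + ga *\<^sub>R (z - zm) - tau *\<^sub>R (g - gm)"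
  have zn_x: "zn = closest_point Z x" by (simp add: zn_def x_def step_def)
  have znZ: "zn \<in> Z" using zn_x closest_point_in_set[OF Zc Zne] by simp
  have proj: "(x - zn) \<bullet> (zs - zn) \<le> 0"
    unfolding zn_x by (rule closest_point_dot[OF Zv Zc zsZ])
  define r where "r = z - zs"
  define rn where "rn = zn - zs"
  define d where "d = zn - z"
  define dm where "dm = z - zm"
  have rn: "rn = r + d" by (simp add: r_def rn_def d_def)
  have a: "d \<bullet> rn + al * (g \<bullet> rn) - ga * (dm \<bullet> rn) + tau * ((g - gm) \<bullet> r) + tau * ((g - gm) \<bullet> d) \<le> 0"
  proof -
    have e1: "x - zn = - (d + al *\<^sub>R g - ga *\<^sub>R dm + tau *\<^sub>R (g - gm))"
      by (simp add: x_def d_def dm_def algebra_simps)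
    have e2: "zs - zn = - rn" by (simp add: rn_def)
    have "(d + al *\<^sub>R g - ga *\<^sub>R dm + tau *\<^sub>R (g - gm)) \<bullet> rn \<le> 0"
      using proj unfolding e1 e2 inner_minus_left inner_minus_right minus_minus .
    then show ?thesis by (simp add: rn inner_add_left inner_diff_left inner_add_right algebra_simps)
  qed
  have b: "2 * (d \<bullet> rn) = (norm rn)\<^sup>2 - (norm r)\<^sup>2 + (norm d)\<^sup>2"
    by (simp add: rn power2_norm_eq_inner inner_add_left inner_add_right inner_commute)
  have c: "F zn \<bullet> rn \<ge> mu * (norm rn)\<^sup>2"
  proof -
    have "(F zn - F zs) \<bullet> rn \<ge> mu * (norm rn)\<^sup>2" using strmon znZ zsZ by (simp add: rn_def)
    moreover have "F zs \<bullet> rn \<ge> 0" using sol znZ by (simp add: rn_def)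
    ultimately show ?thesis by (simp add: inner_diff_left)
  qed
  have dd: "- 2 * tau * ((g - gm) \<bullet> d) \<le> (norm d)\<^sup>2 / 2 + 2 * tau\<^sup>2 * (norm (g - gm))\<^sup>2"
  proof -
    have "0 \<le> (norm (d + (2 * tau) *\<^sub>R (g - gm)))\<^sup>2" by simp
    also have "\<dots> = (norm d)\<^sup>2 + 4 * tau * ((g - gm) \<bullet> d) + 4 * tau\<^sup>2 * (norm (g - gm))\<^sup>2"
      unfolding norm_add_sq norm_scale_sq by (simp add: algebra_simps power2_eq_square inner_commute)
    finally show ?thesis by simp
  qed
  have e: "2 * (dm \<bullet> rn) \<le> (norm dm)\<^sup>2 + (norm rn)\<^sup>2"
  proof -
    have "0 \<le> (norm (dm - rn))\<^sup>2" by simp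
    also have "\<dots> = (norm dm)\<^sup>2 - 2 * (dm \<bullet> rn) + (norm rn)\<^sup>2"
      by (simp add: norm_diff_sq)
    finally show ?thesis by simp
  qed
  have e2: "2 * ga * (dm \<bullet> rn) \<le> ga * (norm dm)\<^sup>2 + ga * (norm rn)\<^sup>2"
    using mult_left_mono[OF e ga] by (simp add: algebra_simps)
  have c2: "2 * al * (F zn \<bullet> rn) \<ge> 2 * al * mu * (norm rn)\<^sup>2"
    using mult_left_mono[OF c, of "2 * al"] al tau rho by simp
  have C1': "(rho - 1 + ga - al * mu) * (norm rn)\<^sup>2 \<le> 0"
    using C1 by (intro mult_nonpos_nonneg) auto
  have C2'': "(ga + 4 * tau\<^sup>2 * L\<^sup>2 - 1 / (2 * rho)) * (norm dm)\<^sup>2 \<le> 0"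
    using C2' by (intro mult_nonpos_nonneg) auto
  have Psin: "Psi zn z g = (norm rn)\<^sup>2 - 2 * tau * (F zn \<bullet> rn) + 2 * tau * (g \<bullet> rn) + (norm d)\<^sup>2 / (2 * rho)"
    by (simp add: Psi_def rn_def d_def inner_diff_left algebra_simps)
  have Psio: "Psi z zm gm - 2 * tau * ((g - F z) \<bullet> (z - zs)) = (norm r)\<^sup>2 - 2 * tau * ((g - gm) \<bullet> r) + (norm dm)\<^sup>2 / (2 * rho)"
    by (simp add: Psi_def r_def dm_def inner_diff_left algebra_simps)
  have rhoal: "rho * (2 * tau * (F zn \<bullet> rn)) = 2 * al * (F zn \<bullet> rn)" "rho * (2 * tau * (g \<bullet> rn)) = 2 * al * (g \<bullet> rn)"
    by (simp_all add: al)
  have rhod: "rho * ((norm d)\<^sup>2 / (2 * rho)) = (norm d)\<^sup>2 / 2" using rho by simp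
  have "rho * Psi zn z g + al * mu * (norm rn)\<^sup>2
      \<le> Psi z zm gm - 2 * tau * ((g - F z) \<bullet> (z - zs)) + 2 * tau\<^sup>2 * (norm (g - gm))\<^sup>2
        - 4 * tau\<^sup>2 * L\<^sup>2 * (norm dm)\<^sup>2"
    unfolding Psio Psin distrib_left right_diff_distrib rhoal rhod
    using a b dd e2 c2 C1' C2'' by (simp add: algebra_simps) 
  then show ?thesis by (simp add: zn_def rn_def dm_def)
qed

lemma step_in: "step z zm g gm \<in> Z"
  unfolding step_def by (rule closest_point_in_set[OF Zc Zne])

lemma young: "2 * (a::real) * b \<le> a\<^sup>2 / 4 + 4 * b\<^sup>2"
proof -
  have "0 \<le> (a / 2 - 2 * b)\<^sup>2" by simp
  then show ?thesis by (simp add: power2_eq_square algebra_simps)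
qed

lemma Psi_lower:
  assumes z: "z \<in> Z" and zp: "zp \<in> Z"
  shows "Psi z zp g \<ge> (norm (z - zs))\<^sup>2 / 2 - 4 * tau\<^sup>2 * (norm (g - F zp))\<^sup>2"
proof -
  define R where "R = norm (z - zs)"
  define Dm where "Dm = norm (z - zp)"
  define E where "E = norm (g - F zp)"
  have split: "(F z - g) \<bullet> (z - zs) = (F z - F zp) \<bullet> (z - zs) - (g - F zp) \<bullet> (z - zs)"
    by (simp add: inner_diff_left)
  have l1: "(F z - F zp) \<bullet> (z - zs) \<le> L * Dm * R"
  proof -
    have "(F z - F zp) \<bullet> (z - zs) \<le> norm (F z - F zp) * R" unfolding R_def by (rule norm_cauchy_schwarz)
    also have "\<dots> \<le> L * Dm * R" unfolding Dm_def R_def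
      using lip z zp by (intro mult_right_mono) auto
    finally show ?thesis .
  qed
  have l2: "- ((g - F zp) \<bullet> (z - zs)) \<le> E * R"
    using norm_cauchy_schwarz[of "F zp - g" "z - zs"] by (simp add: E_def R_def norm_minus_commute inner_diff_left)
  have y1: "2 * (tau * L * Dm) * R \<le> R\<^sup>2 / 4 + 4 * (tau * L * Dm)\<^sup>2" using young[of R "tau * L * Dm"] by (simp add: algebra_simps)
  have y2: "2 * (tau * E) * R \<le> R\<^sup>2 / 4 + 4 * (tau * E)\<^sup>2" using young[of R "tau * E"] by (simp add: algebra_simps)
  have c: "(4 * tau\<^sup>2 * L\<^sup>2 - 1 / (2 * rho)) * Dm\<^sup>2 \<le> 0"
    using C2' ga by (intro mult_nonpos_nonneg) auto
  have t1: "tau * ((F z - F zp) \<bullet> (z - zs)) \<le> tau * (L * Dm * R)" using l1 tau by (simp add: mult_left_mono)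
  have t2: "tau * (- ((g - F zp) \<bullet> (z - zs))) \<le> tau * (E * R)" using mult_left_mono[OF l2, of tau] tau by simp
  have "Psi z zp g = R\<^sup>2 - 2 * tau * ((F z - F zp) \<bullet> (z - zs)) + 2 * tau * ((g - F zp) \<bullet> (z - zs)) + Dm\<^sup>2 / (2 * rho)"
    unfolding Psi_def split R_def Dm_def by (simp add: algebra_simps)
  then show ?thesis using t1 t2 y1 y2 c unfolding R_def[symmetric] E_def[symmetric]
    by (simp add: power_mult_distrib algebra_simps)
qed

lemma Phi_lower:
  assumes z: "z \<in> Z" and zp: "zp \<in> Z"
  shows "Phi z zp g \<ge> (norm (z - zs))\<^sup>2 / 2"
proof -
  have "0 \<le> tau * mu * (norm (z - zs))\<^sup>2" using tau mu by simp
  then show ?thesis using Psi_lower[OF assms, of g] unfolding Phi_def by simp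
qed

lemma g_diff:
  assumes z: "z \<in> Z" and zm: "zm \<in> Z"
  shows "(norm (g - gm))\<^sup>2 \<le> 2 * L\<^sup>2 * (norm (z - zm))\<^sup>2 + 4 * (norm (g - F z))\<^sup>2 + 4 * (norm (gm - F zm))\<^sup>2"
proof -
  have sq: "(norm (a + b :: 'a))\<^sup>2 \<le> 2 * (norm a)\<^sup>2 + 2 * (norm b)\<^sup>2" for a b
  proof -
    have "0 \<le> (norm (a - b))\<^sup>2" by simp
    then show ?thesis unfolding norm_add_sq norm_diff_sq by simp
  qed
  have eq: "g - gm = (F z - F zm) + ((g - F z) + - (gm - F zm))" by simp
  have l: "(norm (F z - F zm))\<^sup>2 \<le> L\<^sup>2 * (norm (z - zm))\<^sup>2"
  proof -
    have "(norm (F z - F zm))\<^sup>2 \<le> (L * norm (z - zm))\<^sup>2"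
      using lip z zm by (intro power_mono) auto
    then show ?thesis by (simp add: power_mult_distrib)
  qed
  have "(norm (g - gm))\<^sup>2 \<le> 2 * (norm (F z - F zm))\<^sup>2 + 2 * (norm ((g - F z) + - (gm - F zm)))\<^sup>2"
    unfolding eq by (rule sq)
  also have "\<dots> \<le> 2 * (norm (F z - F zm))\<^sup>2 + 2 * (2 * (norm (g - F z))\<^sup>2 + 2 * (norm (- (gm - F zm)))\<^sup>2)"
    using sq[of "g - F z" "- (gm - F zm)"] by simp
  finally show ?thesis using l by (simp add: norm_minus_commute)
qed

lemma rec_step:
  assumes z: "z \<in> Z" and zm: "zm \<in> Z"
  shows "rho * Phi (step z zm g gm) z g + tau * mu * (norm (z - zs))\<^sup>2
     \<le> Phi z zm gm + 2 * tau * (norm (g - F z) * norm (z - zs)) + (8 + 4 * rho) * tau\<^sup>2 * (norm (g - F z))\<^sup>2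
        + 4 * tau\<^sup>2 * (norm (gm - F zm))\<^sup>2"
proof -
  have m: "rho * Psi (step z zm g gm) z g + al * mu * (norm (step z zm g gm - zs))\<^sup>2
     \<le> Psi z zm gm - 2 * tau * ((g - F z) \<bullet> (z - zs)) + 2 * tau\<^sup>2 * (norm (g - gm))\<^sup>2
        - 4 * tau\<^sup>2 * L\<^sup>2 * (norm (z - zm))\<^sup>2" by (rule main_step[OF z zm])
  have gd: "2 * tau\<^sup>2 * (norm (g - gm))\<^sup>2 \<le> 2 * tau\<^sup>2 * (2 * L\<^sup>2 * (norm (z - zm))\<^sup>2 + 4 * (norm (g - F z))\<^sup>2 + 4 * (norm (gm - F zm))\<^sup>2)"
    using g_diff[OF z zm, of g gm] by (intro mult_left_mono) auto
  have cs: "- ((g - F z) \<bullet> (z - zs)) \<le> norm (g - F z) * norm (z - zs)"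
    using norm_cauchy_schwarz[of "F z - g" "z - zs"] by (simp add: norm_minus_commute inner_diff_left)
  have cs2: "- 2 * tau * ((g - F z) \<bullet> (z - zs)) \<le> 2 * tau * (norm (g - F z) * norm (z - zs))"
    using mult_left_mono[OF cs, of "2*tau"] tau by (simp add: algebra_simps)
  have gd2: "2 * tau\<^sup>2 * (norm (g - gm))\<^sup>2 - 4 * tau\<^sup>2 * L\<^sup>2 * (norm (z - zm))\<^sup>2 \<le> 8 * tau\<^sup>2 * (norm (g - F z))\<^sup>2 + 8 * tau\<^sup>2 * (norm (gm - F zm))\<^sup>2"
    using gd by (simp add: algebra_simps)
  have Phio: "Phi z zm gm = Psi z zm gm + tau * mu * (norm (z - zs))\<^sup>2 + 4 * tau\<^sup>2 * (norm (gm - F zm))\<^sup>2"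
    by (simp add: Phi_def)
  have "rho * Phi (step z zm g gm) z g = rho * Psi (step z zm g gm) z g + al * mu * (norm (step z zm g gm - zs))\<^sup>2
     + 4 * rho * tau\<^sup>2 * (norm (g - F z))\<^sup>2"
    unfolding Phi_def al by (simp add: algebra_simps)
  then show ?thesis using m gd2 cs2 Phio by (simp add: algebra_simps)
qed

lemma rec_base:
  assumes z: "z \<in> Z"
  shows "rho * Phi (step z z g g) z g \<le> (norm (z - zs))\<^sup>2 + 4 * rho * tau\<^sup>2 * (norm (g - F z))\<^sup>2"
proof -
  have m: "rho * Psi (step z z g g) z g + al * mu * (norm (step z z g g - zs))\<^sup>2
     \<le> Psi z z g - 2 * tau * ((g - F z) \<bullet> (z - zs)) + 2 * tau\<^sup>2 * (norm (g - g))\<^sup>2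
        - 4 * tau\<^sup>2 * L\<^sup>2 * (norm (z - z))\<^sup>2" by (rule main_step[OF z z])
  have "Psi z z g - 2 * tau * ((g - F z) \<bullet> (z - zs)) = (norm (z - zs))\<^sup>2"
    unfolding Psi_def by (simp add: inner_diff_left algebra_simps)
  moreover have "rho * Phi (step z z g g) z g = rho * Psi (step z z g g) z g + al * mu * (norm (step z z g g - zs))\<^sup>2
     + 4 * rho * tau\<^sup>2 * (norm (g - F z))\<^sup>2"
    unfolding Phi_def al by (simp add: algebra_simps)
  ultimately show ?thesis using m by simp
qed

end


lemma upd_meas:
  "(\<lambda>(x, X). X(k := x)) \<in> measurable (D \<Otimes>\<^sub>M (\<Pi>\<^sub>M j\<in>(UNIV::nat set). D)) (\<Pi>\<^sub>M j\<in>(UNIV::nat set). D)"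
proof -
  have "(\<lambda>p. (snd p)(k := fst p)) \<in> measurable (D \<Otimes>\<^sub>M (\<Pi>\<^sub>M j\<in>(UNIV::nat set). D)) (\<Pi>\<^sub>M j\<in>(UNIV::nat set). D)"
    by (rule measurable_fun_upd[where J=UNIV]) auto
  then show ?thesis by (simp add: case_prod_beta')
qed

lemma nn_integral_split_coord:
  assumes D: "prob_space D"
    and f: "f \<in> borel_measurable (\<Pi>\<^sub>M j\<in>(UNIV::nat set). D)"
  shows "(\<integral>\<^sup>+ \<omega>. f \<omega> \<partial>(\<Pi>\<^sub>M j\<in>(UNIV::nat set). D))
       = (\<integral>\<^sup>+ \<omega>. (\<integral>\<^sup>+ \<xi>. f (fun_upd \<omega> k \<xi>) \<partial>D) \<partial>(\<Pi>\<^sub>M j\<in>(UNIV::nat set). D))"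
proof -
  let ?P = "\<Pi>\<^sub>M j\<in>(UNIV::nat set). D"
  interpret D: prob_space D by fact
  interpret P: prob_space ?P by (intro prob_space_PiM D)
  interpret pair_sigma_finite D ?P by unfold_locales
  have eq: "distr (D \<Otimes>\<^sub>M ?P) ?P (\<lambda>(x, X). X(k := x)) = ?P"
    using distr_pair_PiM_eq_PiM[of UNIV "\<lambda>_. D" k] D by simp
  have "(\<integral>\<^sup>+ \<omega>. f \<omega> \<partial>?P) = (\<integral>\<^sup>+ \<omega>. f \<omega> \<partial>distr (D \<Otimes>\<^sub>M ?P) ?P (\<lambda>(x, X). X(k := x)))"
    by (simp add: eq)
  also have "\<dots> = (\<integral>\<^sup>+ p. f ((\<lambda>(x, X). X(k := x)) p) \<partial>(D \<Otimes>\<^sub>M ?P))"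
    using f by (intro nn_integral_distr[OF upd_meas]) simp
  also have "\<dots> = (\<integral>\<^sup>+ X. (\<integral>\<^sup>+ x. f (X(k := x)) \<partial>D) \<partial>?P)"
  proof -
    have m: "(\<lambda>p. f ((\<lambda>(x, X). X(k := x)) p)) \<in> borel_measurable (D \<Otimes>\<^sub>M ?P)"
      using measurable_comp[OF upd_meas f] by (simp add: comp_def)
    show ?thesis using nn_integral_snd[OF m] by (simp add: case_prod_beta')
  qed
  finally show ?thesis .
qed

lemma nn_integral_shift:
  assumes D: "prob_space D" and B[measurable]: "B \<in> borel_measurable D"
    and nonneg: "\<And>\<xi>. \<xi> \<in> space D \<Longrightarrow> 0 \<le> B \<xi>"
    and pos: "\<And>\<xi>. \<xi> \<in> space D \<Longrightarrow> 0 \<le> A + B \<xi>"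
    and int: "(\<integral>\<^sup>+ \<xi>. ennreal (B \<xi>) \<partial>D) \<le> ennreal b" and b0: "0 \<le> b"
  shows "(\<integral>\<^sup>+ \<xi>. ennreal (A + B \<xi>) \<partial>D) \<le> ennreal (A + b)"
proof -
  interpret D: prob_space D by fact
  have m1: "(\<lambda>\<xi>. ennreal (A + B \<xi>)) \<in> borel_measurable D" by measurable
  have m2: "(\<lambda>\<xi>. ennreal (B \<xi>)) \<in> borel_measurable D" by measurable
  define X where "X = (\<integral>\<^sup>+ \<xi>. ennreal (A + B \<xi>) \<partial>D)"
  have "X + ennreal (max 0 (- A))
      = (\<integral>\<^sup>+ \<xi>. (ennreal (A + B \<xi>) + ennreal (max 0 (- A))) \<partial>D)"
    unfolding X_def by (subst nn_integral_add) (auto simp: D.emeasure_space_1 m1)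
  also have "\<dots> = (\<integral>\<^sup>+ \<xi>. (ennreal (max 0 A) + ennreal (B \<xi>)) \<partial>D)"
  proof (intro nn_integral_cong)
    fix \<xi> assume "\<xi> \<in> space D"
    then have "0 \<le> A + B \<xi>" "0 \<le> B \<xi>" using pos nonneg by auto
    then show "ennreal (A + B \<xi>) + ennreal (max 0 (- A)) = ennreal (max 0 A) + ennreal (B \<xi>)"
    proof (cases "0 \<le> A")
      case True
      then show ?thesis using \<open>0 \<le> B \<xi>\<close> by (simp add: ennreal_plus[symmetric] ennreal_neg max_def del: ennreal_plus)
    next
      case False
      then show ?thesis using \<open>0 \<le> B \<xi>\<close> \<open>0 \<le> A + B \<xi>\<close>
        by (simp add: ennreal_plus[symmetric] ennreal_neg max_def del: ennreal_plus)
    qed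
  qed
  also have "\<dots> = ennreal (max 0 A) + (\<integral>\<^sup>+ \<xi>. ennreal (B \<xi>) \<partial>D)"
    by (subst nn_integral_add) (auto simp: D.emeasure_space_1 m2)
  also have "\<dots> \<le> ennreal (max 0 A) + ennreal b"
    using int by (rule add_left_mono)
  finally have *: "X + ennreal (max 0 (- A)) \<le> ennreal (max 0 A) + ennreal b" .
  show ?thesis
  proof (cases X)
    case (real x)
    have e1: "ennreal (x + max 0 (- A)) = X + ennreal (max 0 (- A))"
      using real ennreal_plus[of x "max 0 (- A)"] by simp
    have e2: "ennreal (max 0 A + b) = ennreal (max 0 A) + ennreal b"
      using b0 ennreal_plus[of "max 0 A" b] by simp
    have "ennreal (x + max 0 (- A)) \<le> ennreal (max 0 A + b)"
      unfolding e1 e2 by (rule *)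
    then have "x + max 0 (- A) \<le> max 0 A + b"
      using b0 by (subst (asm) ennreal_le_iff) auto
    then have "x \<le> A + b" by (simp add: max_def split: if_splits)
    then show ?thesis using real by (simp add: X_def[symmetric])
  next
    case top
    then show ?thesis using * by (simp add: top_unique)
  qed
qed

lemma nn_integral_affine_le:
  assumes M: "prob_space M" and f[measurable]: "f \<in> borel_measurable M"
    and nn: "\<And>x. x \<in> space M \<Longrightarrow> 0 \<le> f x"
    and a: "0 \<le> a" and b: "0 \<le> b" and s: "(\<integral>\<^sup>+ x. ennreal (f x) \<partial>M) \<le> ennreal s" and s0: "0 \<le> s"
  shows "(\<integral>\<^sup>+ x. ennreal (a + b * f x) \<partial>M) \<le> ennreal (a + b * s)"
proof -
  interpret prob_space M by fact
  have "(\<integral>\<^sup>+ x. ennreal (a + b * f x) \<partial>M) = (\<integral>\<^sup>+ x. (ennreal a + ennreal b * ennreal (f x)) \<partial>M)"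
  proof (intro nn_integral_cong)
    fix x assume "x \<in> space M"
    then have "0 \<le> f x" by (rule nn)
    then show "ennreal (a + b * f x) = ennreal a + ennreal b * ennreal (f x)"
      using a b by (simp add: ennreal_mult ennreal_plus)
  qed
  also have "\<dots> = ennreal a + ennreal b * (\<integral>\<^sup>+ x. ennreal (f x) \<partial>M)"
    by (subst nn_integral_add) (auto simp: nn_integral_cmult emeasure_space_1)
  also have "\<dots> \<le> ennreal a + ennreal b * ennreal s"
    using s by (intro add_left_mono mult_left_mono) auto
  also have "\<dots> = ennreal (a + b * s)"
    using a b s0 by (simp add: ennreal_mult ennreal_plus)
  finally show ?thesis .
qed

lemma nn_integral_lin2_le:
  assumes M: "prob_space M" and f[measurable]: "f \<in> borel_measurable M" and h[measurable]: "h \<in> borel_measurable M"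
    and nnf: "\<And>x. x \<in> space M \<Longrightarrow> 0 \<le> f x" and nnh: "\<And>x. x \<in> space M \<Longrightarrow> 0 \<le> h x"
    and a: "0 \<le> a" and b: "0 \<le> b"
    and s: "(\<integral>\<^sup>+ x. ennreal (f x) \<partial>M) \<le> ennreal s" and s0: "0 \<le> s"
    and t: "(\<integral>\<^sup>+ x. ennreal (h x) \<partial>M) \<le> ennreal t" and t0: "0 \<le> t"
  shows "(\<integral>\<^sup>+ x. ennreal (a * f x + b * h x) \<partial>M) \<le> ennreal (a * s + b * t)"
proof -
  interpret prob_space M by fact
  have "(\<integral>\<^sup>+ x. ennreal (a * f x + b * h x) \<partial>M) = (\<integral>\<^sup>+ x. (ennreal a * ennreal (f x) + ennreal b * ennreal (h x)) \<partial>M)"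
  proof (intro nn_integral_cong)
    fix x assume "x \<in> space M"
    then have "0 \<le> f x" "0 \<le> h x" by (auto intro: nnf nnh)
    then show "ennreal (a * f x + b * h x) = ennreal a * ennreal (f x) + ennreal b * ennreal (h x)"
      using a b by (simp add: ennreal_mult ennreal_plus)
  qed
  also have "\<dots> = ennreal a * (\<integral>\<^sup>+ x. ennreal (f x) \<partial>M) + ennreal b * (\<integral>\<^sup>+ x. ennreal (h x) \<partial>M)"
    by (subst nn_integral_add) (auto simp: nn_integral_cmult)
  also have "\<dots> \<le> ennreal a * ennreal s + ennreal b * ennreal t"
    using s t by (intro add_mono mult_left_mono) auto
  also have "\<dots> = ennreal (a * s + b * t)"
    using a b s0 t0 by (simp add: ennreal_mult ennreal_plus)
  finally show ?thesis .
qed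



theorem theorem2:
  fixes Z :: "'a::euclidean_space set"
    and F :: "'a \<Rightarrow> 'a"
    and D :: "'b measure"
    and Fh :: "'a \<Rightarrow> 'b \<Rightarrow> 'a"
    and \<mu> L \<delta> \<sigma> \<alpha> \<gamma> \<tau> \<theta> :: real
    and zstar z0 :: 'a
  assumes Z: "closed Z" "convex Z" "Z \<noteq> {}"
    and mu_L: "0 < \<mu>" "\<mu> \<le> L"
    and strmon: "\<forall>z\<in>Z. \<forall>z'\<in>Z. (F z - F z') \<bullet> (z - z') \<ge> \<mu> * (norm (z - z'))\<^sup>2"
    and lip: "\<forall>z\<in>Z. \<forall>z'\<in>Z. norm (F z - F z') \<le> L * norm (z - z')"
    and sol: "zstar \<in> Z" "\<forall>z\<in>Z. F zstar \<bullet> (z - zstar) \<ge> 0"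
    and D: "prob_space D"
    and meas: "(\<lambda>p. Fh (fst p) (snd p)) \<in> borel_measurable (borel \<Otimes>\<^sub>M D)"
    and noise: "\<delta> \<ge> 0" "\<sigma> \<ge> 0"
      "\<forall>z\<in>Z. (\<integral>\<^sup>+ \<xi>. ennreal (norm (Fh z \<xi> - F z)) \<partial>D) \<le> ennreal \<delta>"
      "\<forall>z\<in>Z. (\<integral>\<^sup>+ \<xi>. ennreal ((norm (Fh z \<xi> - F z))\<^sup>2) \<partial>D) \<le> ennreal (\<sigma>\<^sup>2)"
    and z0: "z0 \<in> Z"
    and params: "\<alpha> \<ge> 0" "\<gamma> \<ge> 0" "\<tau> \<ge> 0" "0 < \<theta>" "\<theta> \<le> 1"
      "1 + \<alpha> * \<mu> - \<gamma> \<ge> 1 + \<theta> / (L / \<mu>)"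
      "\<alpha> / \<tau> = 1 + \<theta> / (L / \<mu>)"
      "1 / (8 * \<tau>\<^sup>2 * L\<^sup>2 + 2 * \<gamma>) \<ge> 1 + \<theta> / (L / \<mu>)"
  shows "(\<integral>\<^sup>+ \<omega>. ennreal ((norm (em_z Z Fh \<alpha> \<gamma> \<tau> z0 k \<omega> - zstar))\<^sup>2)
            \<partial>(\<Pi>\<^sub>M j\<in>(UNIV::nat set). D))
         \<le> ennreal (2 * (norm (z0 - zstar))\<^sup>2 / (1 + \<theta> / (L / \<mu>)) ^ k
                    + ((L / \<mu>) / \<theta> + 1) * 32 * \<tau>\<^sup>2 * \<sigma>\<^sup>2
                    + 2 * (L / \<mu>) * \<alpha> * \<delta>\<^sup>2 / (\<theta> * \<mu>))"
proof -
  let ?P = "\<Pi>\<^sub>M j\<in>(UNIV::nat set). D"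
  interpret Dp: prob_space D by (rule D)
  interpret P: prob_space ?P by (intro prob_space_PiM D)
  define K where "K = (L / \<mu>) / \<theta>"
  define rho where "rho = 1 + \<theta> / (L / \<mu>)"
  have Lpos: "0 < L" using mu_L by simp
  have Kpos: "0 < K" using Lpos mu_L params by (simp add: K_def)
  have rhoK: "rho = 1 + 1 / K" by (simp add: rho_def K_def)
  have rho1: "1 < rho" using Kpos by (simp add: rhoK)
  have tau: "0 < \<tau>"
  proof (rule ccontr)
    assume "\<not> 0 < \<tau>" then have "\<tau> = 0" using params by simp
    then show False using params(7) rho1 by (simp add: rho_def)
  qed
  have al: "\<alpha> = rho * \<tau>" using params(7) tau by (simp add: rho_def field_simps)
  have C1: "1 + \<alpha> * \<mu> - \<gamma> \<ge> rho" using params(6) by (simp add: rho_def)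
  have C2: "8 * \<tau>\<^sup>2 * L\<^sup>2 + 2 * \<gamma> \<le> 1 / rho"
  proof -
    have pos: "0 < 8 * \<tau>\<^sup>2 * L\<^sup>2 + 2 * \<gamma>" using tau Lpos params by (simp add: add_pos_nonneg)
    have "rho \<le> 1 / (8 * \<tau>\<^sup>2 * L\<^sup>2 + 2 * \<gamma>)" using params(8) by (simp add: rho_def)
    then show ?thesis using pos rho1 by (simp add: field_simps)
  qed
  define Fc where "Fc = (\<lambda>z. F (closest_point Z z))"
  have FcZ: "z \<in> Z \<Longrightarrow> Fc z = F z" for z by (simp add: Fc_def closest_point_self)
  have contF: "continuous_on Z F"
  proof (rule lipschitz_on_continuous_on[of L])
    show "L-lipschitz_on Z F"
      using lip Lpos by (intro lipschitz_onI) (auto simp: dist_norm)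
  qed
  have contFc: "continuous_on UNIV Fc"
    unfolding Fc_def
    by (rule continuous_on_compose2[OF contF continuous_on_closest_point[OF Z(2,1,3)]])
       (use closest_point_in_set[OF Z(1,3)] in auto)
  have contP: "continuous_on UNIV (closest_point Z)"
    by (rule continuous_on_closest_point[OF Z(2,1,3)])
  have Fc_meas[measurable (raw)]: "f \<in> borel_measurable M \<Longrightarrow> (\<lambda>x. Fc (f x)) \<in> borel_measurable M" for f and M :: "'c measure"
    by (rule borel_measurable_continuous_on[OF contFc])
  have CP_meas[measurable (raw)]: "f \<in> borel_measurable M \<Longrightarrow> (\<lambda>x. closest_point Z (f x)) \<in> borel_measurable M" for f and M :: "'c measure"
    by (rule borel_measurable_continuous_on[OF contP])
  interpret S: emsetup Z Fc \<mu> L \<alpha> \<gamma> \<tau> rho zstar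
  proof
    show "\<forall>z\<in>Z. \<forall>z'\<in>Z. \<mu> * (norm (z - z'))\<^sup>2 \<le> (Fc z - Fc z') \<bullet> (z - z')" using strmon FcZ by simp
    show "\<forall>z\<in>Z. \<forall>z'\<in>Z. norm (Fc z - Fc z') \<le> L * norm (z - z')" using lip FcZ by simp
    show "\<forall>z\<in>Z. 0 \<le> Fc zstar \<bullet> (z - zstar)" using sol FcZ by simp
  qed (use Z mu_L sol tau rho1 al params C1 C2 in auto)
  define it where "it = (\<lambda>\<omega> k. em_iter Z Fh \<alpha> \<gamma> \<tau> z0 \<omega> k)"
  define zz where "zz = (\<lambda>k \<omega>. fst (it \<omega> k))"
  define zp where "zp = (\<lambda>k \<omega>. snd (it \<omega> k))"
  have it0: "it \<omega> 0 = (z0, z0)" for \<omega> by (simp add: it_def)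
  have itS: "it \<omega> (Suc k) = (S.step (zz k \<omega>) (zp k \<omega>) (Fh (zz k \<omega>) (\<omega> k))
      (if k = 0 then Fh (zz k \<omega>) (\<omega> 0) else Fh (zp k \<omega>) (\<omega> (k - 1))), zz k \<omega>)" for \<omega> k
    by (cases k; cases "it \<omega> k") (simp_all add: it_def zz_def zp_def S.step_def Let_def)
  have zz0: "zz 0 \<omega> = z0" "zp 0 \<omega> = z0" for \<omega> by (simp_all add: zz_def zp_def it0)
  have zpS: "zp (Suc k) \<omega> = zz k \<omega>" for k \<omega> by (simp add: zp_def itS)
  have zz1: "zz (Suc 0) \<omega> = S.step z0 z0 (Fh z0 (\<omega> 0)) (Fh z0 (\<omega> 0))" for \<omega>
  proof -
    have "zz (Suc 0) \<omega> = fst (it \<omega> (Suc 0))" by (simp add: zz_def)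
    also have "\<dots> = S.step (zz 0 \<omega>) (zp 0 \<omega>) (Fh (zz 0 \<omega>) (\<omega> 0)) (Fh (zz 0 \<omega>) (\<omega> 0))"
      by (subst itS) simp
    finally show ?thesis by (simp add: zz0)
  qed
  have zzSS: "zz (Suc (Suc k)) \<omega> = S.step (zz (Suc k) \<omega>) (zz k \<omega>) (Fh (zz (Suc k) \<omega>) (\<omega> (Suc k))) (Fh (zz k \<omega>) (\<omega> k))" for k \<omega>
  proof -
    have "zz (Suc (Suc k)) \<omega> = fst (it \<omega> (Suc (Suc k)))" by (simp add: zz_def)
    also have "\<dots> = S.step (zz (Suc k) \<omega>) (zp (Suc k) \<omega>) (Fh (zz (Suc k) \<omega>) (\<omega> (Suc k))) (Fh (zp (Suc k) \<omega>) (\<omega> k))"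
      by (subst itS) simp
    finally show ?thesis by (simp add: zpS)
  qed
  have zzZ: "zz k \<omega> \<in> Z" for k \<omega>
    by (cases k) (auto simp: z0 zz_def itS S.step_in it0)
  have prefix: "(\<forall>j<k. \<omega> j = \<omega>' j) \<Longrightarrow> it \<omega> k = it \<omega>' k" for k \<omega> \<omega>'
  proof (induction k)
    case 0 then show ?case by (simp add: it0)
  next
    case (Suc k)
    then have IH: "it \<omega> k = it \<omega>' k" by simp
    then have "zz k \<omega> = zz k \<omega>'" "zp k \<omega> = zp k \<omega>'" by (simp_all add: zz_def zp_def)
    moreover have "\<omega> k = \<omega>' k" "\<omega> 0 = \<omega>' 0" using Suc.prems by auto
    moreover have "k \<noteq> 0 \<Longrightarrow> \<omega> (k - 1) = \<omega>' (k - 1)" using Suc.prems by auto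
    ultimately show ?case by (simp add: itS zz0)
  qed
  have zz_upd: "j \<ge> k \<Longrightarrow> zz k (fun_upd \<omega> j \<xi>) = zz k \<omega>" for j k \<omega> \<xi>
    unfolding zz_def by (subst prefix[of k "fun_upd \<omega> j \<xi>" \<omega>]) auto
  have Fh_meas: "f \<in> borel_measurable ?P \<Longrightarrow> (\<lambda>\<omega>. Fh (f \<omega>) (\<omega> j)) \<in> borel_measurable ?P" for f j
  proof -
    assume f: "f \<in> borel_measurable ?P"
    have "(\<lambda>\<omega>. (f \<omega>, \<omega> j)) \<in> measurable ?P (borel \<Otimes>\<^sub>M D)"
      using f by (intro measurable_Pair measurable_component_singleton) auto
    from measurable_compose[OF this meas] show ?thesis by simp
  qed
  have Fh_measD: "(\<lambda>\<xi>. Fh z \<xi>) \<in> borel_measurable D" for z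
  proof -
    have "(\<lambda>\<xi>. (z, \<xi>)) \<in> measurable D (borel \<Otimes>\<^sub>M D)" by measurable
    from measurable_compose[OF this meas] show ?thesis by simp
  qed
  have it_meas: "zz k \<in> borel_measurable ?P \<and> zp k \<in> borel_measurable ?P" for k
  proof (induction k)
    case 0 then show ?case by (simp add: zz0[abs_def])
  next
    case (Suc k)
    then have m1[measurable]: "zz k \<in> borel_measurable ?P" and m2[measurable]: "zp k \<in> borel_measurable ?P" by auto
    have [measurable]: "(\<lambda>\<omega>. Fh (zz k \<omega>) (\<omega> j)) \<in> borel_measurable ?P" for j by (rule Fh_meas) simp
    have [measurable]: "(\<lambda>\<omega>. Fh (zp k \<omega>) (\<omega> j)) \<in> borel_measurable ?P" for j by (rule Fh_meas) simp
    have eq: "zz (Suc k) = (\<lambda>\<omega>. closest_point Z (zz k \<omega> - \<alpha> *\<^sub>R Fh (zz k \<omega>) (\<omega> k) + \<gamma> *\<^sub>R (zz k \<omega> - zp k \<omega>)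
       - \<tau> *\<^sub>R (Fh (zz k \<omega>) (\<omega> k) - (if k = 0 then Fh (zz k \<omega>) (\<omega> 0) else Fh (zp k \<omega>) (\<omega> (k - 1))))))"
      by (simp add: zz_def itS fun_eq_iff S.step_def)
    have "(\<lambda>\<omega>. closest_point Z (zz k \<omega> - \<alpha> *\<^sub>R Fh (zz k \<omega>) (\<omega> k) + \<gamma> *\<^sub>R (zz k \<omega> - zp k \<omega>)
       - \<tau> *\<^sub>R (Fh (zz k \<omega>) (\<omega> k) - (if k = 0 then Fh (zz k \<omega>) (\<omega> 0) else Fh (zp k \<omega>) (\<omega> (k - 1)))))) \<in> borel_measurable ?P"
      by measurable
    moreover have "zp (Suc k) = zz k" by (simp add: zpS fun_eq_iff)
    ultimately show ?case using eq m1 by simp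
  qed
  have zz_meas[measurable]: "zz k \<in> borel_measurable ?P" for k using it_meas by simp
  define g where "g = (\<lambda>k \<omega>. Fh (zz k \<omega>) (\<omega> k))"
  define E where "E = (\<lambda>k \<omega>. (norm (g k \<omega> - Fc (zz k \<omega>)))\<^sup>2)"
  define X where "X = (\<lambda>k \<omega>. S.Phi (zz (Suc k) \<omega>) (zz k \<omega>) (g k \<omega>))"
  define R0 where "R0 = (norm (z0 - zstar))\<^sup>2"
  have g_meas[measurable]: "g k \<in> borel_measurable ?P" for k
    unfolding g_def by (rule Fh_meas) simp
  have E_meas[measurable]: "E k \<in> borel_measurable ?P" for k
    unfolding E_def by measurable
  have X_meas[measurable]: "X k \<in> borel_measurable ?P" for k
    unfolding X_def S.Phi_def S.Psi_def by measurable
  have XB: "rho * X 0 \<omega> \<le> R0 + 4 * rho * \<tau>\<^sup>2 * E 0 \<omega>" for \<omega>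
    using S.rec_base[OF z0, of "Fh z0 (\<omega> 0)"]
    by (simp add: X_def zz1 zz0 g_def E_def R0_def)
  have XS: "rho * X (Suc k) \<omega> + \<tau> * \<mu> * (norm (zz (Suc k) \<omega> - zstar))\<^sup>2
      \<le> X k \<omega> + 2 * \<tau> * (norm (g (Suc k) \<omega> - Fc (zz (Suc k) \<omega>)) * norm (zz (Suc k) \<omega> - zstar))
        + (8 + 4 * rho) * \<tau>\<^sup>2 * E (Suc k) \<omega> + 4 * \<tau>\<^sup>2 * E k \<omega>" for k \<omega>
    using S.rec_step[OF zzZ zzZ, of "Suc k" \<omega> k \<omega> "g (Suc k) \<omega>" "g k \<omega>"]
    by (simp add: X_def zzSS g_def E_def)
  have Xlo: "(norm (zz (Suc k) \<omega> - zstar))\<^sup>2 \<le> 2 * X k \<omega>" for k \<omega>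
    using S.Phi_lower[OF zzZ zzZ, of "Suc k" \<omega> k \<omega> "g k \<omega>"] by (simp add: X_def)
  have Xnn: "0 \<le> X k \<omega>" for k \<omega>
    using Xlo[of k \<omega>] by (smt (verit) zero_le_power2)
  have Ebound: "(\<integral>\<^sup>+ \<omega>. ennreal (E k \<omega>) \<partial>?P) \<le> ennreal (\<sigma>\<^sup>2)" for k
  proof -
    have "(\<integral>\<^sup>+ \<omega>. ennreal (E k \<omega>) \<partial>?P) = (\<integral>\<^sup>+ \<omega>. (\<integral>\<^sup>+ \<xi>. ennreal (E k (fun_upd \<omega> k \<xi>)) \<partial>D) \<partial>?P)"
      by (rule nn_integral_split_coord[OF D]) measurable
    also have "\<dots> \<le> (\<integral>\<^sup>+ \<omega>. ennreal (\<sigma>\<^sup>2) \<partial>?P)"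
    proof (rule nn_integral_mono)
      fix \<omega>
      have "E k (fun_upd \<omega> k \<xi>) = (norm (Fh (zz k \<omega>) \<xi> - F (zz k \<omega>)))\<^sup>2" for \<xi>
        by (simp add: E_def g_def zz_upd FcZ[OF zzZ])
      then show "(\<integral>\<^sup>+ \<xi>. ennreal (E k (fun_upd \<omega> k \<xi>)) \<partial>D) \<le> ennreal (\<sigma>\<^sup>2)"
        using noise(4) zzZ by simp
    qed
    also have "\<dots> = ennreal (\<sigma>\<^sup>2)" by (simp add: P.emeasure_space_1)
    finally show ?thesis .
  qed
  have Fh_measD'[measurable]: "(\<lambda>\<xi>. Fh z \<xi>) \<in> borel_measurable D" for z by (rule Fh_measD)
  define c1 where "c1 = \<tau> * \<delta>\<^sup>2 / \<mu> + (8 + 4 * rho) * \<tau>\<^sup>2 * \<sigma>\<^sup>2"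
  define c where "c = 4 * \<tau>\<^sup>2 * \<sigma>\<^sup>2 + c1"
  define M where "M = K * \<tau> * \<delta>\<^sup>2 / \<mu> + (16 * K + 8) * \<tau>\<^sup>2 * \<sigma>\<^sup>2"
  have c1_nn: "0 \<le> c1" using tau mu_L rho1 by (simp add: c1_def)
  have M_nn: "0 \<le> M" using tau mu_L Kpos by (simp add: M_def)
  have cM: "c \<le> (rho - 1) * M"
  proof -
    have "(rho - 1) * M = \<tau> * \<delta>\<^sup>2 / \<mu> + (16 + 8 / K) * \<tau>\<^sup>2 * \<sigma>\<^sup>2"
      using Kpos by (simp add: rhoK M_def field_simps)
    moreover have "c = \<tau> * \<delta>\<^sup>2 / \<mu> + (16 + 4 / K) * \<tau>\<^sup>2 * \<sigma>\<^sup>2"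
      using Kpos by (simp add: rhoK c_def c1_def field_simps)
    moreover have "4 / K \<le> 8 / K" using Kpos by (simp add: divide_right_mono)
    ultimately show ?thesis using tau by (simp add: mult_right_mono)
  qed
  have R0_nn: "0 \<le> R0" by (simp add: R0_def)
  have inner: "(\<integral>\<^sup>+ \<xi>. ennreal (rho * X (Suc k) (fun_upd \<omega> (Suc k) \<xi>)) \<partial>D)
      \<le> ennreal (X k \<omega> + 4 * \<tau>\<^sup>2 * E k \<omega> + c1)" for k \<omega>
  proof -
    define z where "z = zz (Suc k) \<omega>"
    define r where "r = norm (z - zstar)"
    define a where "a = (\<lambda>\<xi>. norm (Fh z \<xi> - F z))"
    define A where "A = X k \<omega> + 4 * \<tau>\<^sup>2 * E k \<omega> - \<tau> * \<mu> * r\<^sup>2"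
    define B where "B = (\<lambda>\<xi>. (2 * \<tau> * r) * a \<xi> + ((8 + 4 * rho) * \<tau>\<^sup>2) * (a \<xi>)\<^sup>2)"
    have zZ: "z \<in> Z" by (simp add: z_def zzZ)
    have upd: "zz (Suc k) (fun_upd \<omega> (Suc k) \<xi>) = z" "zz k (fun_upd \<omega> (Suc k) \<xi>) = zz k \<omega>"
      "g k (fun_upd \<omega> (Suc k) \<xi>) = g k \<omega>" "g (Suc k) (fun_upd \<omega> (Suc k) \<xi>) = Fh z \<xi>" for \<xi>
      by (simp_all add: z_def zz_upd g_def)
    have updX: "X k (fun_upd \<omega> (Suc k) \<xi>) = X k \<omega>" "E k (fun_upd \<omega> (Suc k) \<xi>) = E k \<omega>"
      "E (Suc k) (fun_upd \<omega> (Suc k) \<xi>) = (a \<xi>)\<^sup>2" for \<xi>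
      by (simp_all add: X_def E_def upd a_def FcZ[OF zzZ] z_def del: fun_upd_apply)
    have pt: "rho * X (Suc k) (fun_upd \<omega> (Suc k) \<xi>) \<le> A + B \<xi>" for \<xi>
      using XS[of k "fun_upd \<omega> (Suc k) \<xi>"]
      unfolding upd updX by (simp add: A_def B_def a_def r_def FcZ[OF zZ] algebra_simps)
    have a_meas[measurable]: "a \<in> borel_measurable D" unfolding a_def by measurable
    have B_meas: "B \<in> borel_measurable D" unfolding B_def by measurable
    have Bint: "(\<integral>\<^sup>+ \<xi>. ennreal (B \<xi>) \<partial>D) \<le> ennreal ((2 * \<tau> * r) * \<delta> + ((8 + 4 * rho) * \<tau>\<^sup>2) * \<sigma>\<^sup>2)"
      unfolding B_def
    proof (rule nn_integral_lin2_le[OF D])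
      show "(\<lambda>x. (a x)\<^sup>2) \<in> borel_measurable D" by measurable
      show "(\<integral>\<^sup>+ x. ennreal (a x) \<partial>D) \<le> ennreal \<delta>" using noise(3) zZ by (simp add: a_def)
      show "(\<integral>\<^sup>+ x. ennreal ((a x)\<^sup>2) \<partial>D) \<le> ennreal (\<sigma>\<^sup>2)" using noise(4) zZ by (simp add: a_def)
    qed (use tau rho1 noise r_def in \<open>auto simp: a_def\<close>)
    have "(\<integral>\<^sup>+ \<xi>. ennreal (rho * X (Suc k) (fun_upd \<omega> (Suc k) \<xi>)) \<partial>D) \<le> (\<integral>\<^sup>+ \<xi>. ennreal (A + B \<xi>) \<partial>D)"
      by (intro nn_integral_mono ennreal_leI pt)
    also have "\<dots> \<le> ennreal (A + ((2 * \<tau> * r) * \<delta> + ((8 + 4 * rho) * \<tau>\<^sup>2) * \<sigma>\<^sup>2))"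
    proof (rule nn_integral_shift[OF D B_meas _ _ Bint])
      show "0 \<le> B \<xi>" for \<xi> using tau rho1 by (simp add: B_def r_def a_def)
      show "0 \<le> A + B \<xi>" for \<xi>
        using pt[of \<xi>] Xnn[of "Suc k" "fun_upd \<omega> (Suc k) \<xi>"] rho1 by (smt (verit) mult_nonneg_nonneg)
      show "0 \<le> 2 * \<tau> * r * \<delta> + (8 + 4 * rho) * \<tau>\<^sup>2 * \<sigma>\<^sup>2"
        using tau rho1 noise by (simp add: r_def)
    qed
    also have "\<dots> \<le> ennreal (X k \<omega> + 4 * \<tau>\<^sup>2 * E k \<omega> + c1)"
    proof (rule ennreal_leI)
      have "\<mu> * (2 * r * \<delta> - \<mu> * r\<^sup>2) \<le> \<delta>\<^sup>2"
      proof -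
        have "0 \<le> (\<mu> * r - \<delta>)\<^sup>2" by simp
        then show ?thesis by (simp add: power2_eq_square algebra_simps)
      qed
      then have "2 * r * \<delta> - \<mu> * r\<^sup>2 \<le> \<delta>\<^sup>2 / \<mu>" using mu_L by (simp add: field_simps)
      then have "\<tau> * (2 * r * \<delta> - \<mu> * r\<^sup>2) \<le> \<tau> * (\<delta>\<^sup>2 / \<mu>)" using tau by (intro mult_left_mono) auto
      then show "A + (2 * \<tau> * r * \<delta> + (8 + 4 * rho) * \<tau>\<^sup>2 * \<sigma>\<^sup>2) \<le> X k \<omega> + 4 * \<tau>\<^sup>2 * E k \<omega> + c1"
        by (simp add: A_def c1_def algebra_simps)
    qed
    finally show ?thesis .
  qed
  have Pprob: "prob_space ?P" by (rule P.prob_space_axioms)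
  have Enn: "0 \<le> E k \<omega>" for k \<omega> by (simp add: E_def)
  have main: "(\<integral>\<^sup>+ \<omega>. ennreal (X k \<omega>) \<partial>?P) \<le> ennreal (R0 / rho ^ (Suc k) + M)" for k
  proof (induction k)
    case 0
    have "(\<integral>\<^sup>+ \<omega>. ennreal (X 0 \<omega>) \<partial>?P) \<le> (\<integral>\<^sup>+ \<omega>. ennreal (R0 / rho + (4 * \<tau>\<^sup>2) * E 0 \<omega>) \<partial>?P)"
    proof (intro nn_integral_mono ennreal_leI)
      fix \<omega>
      have "rho * X 0 \<omega> \<le> rho * (R0 / rho + (4 * \<tau>\<^sup>2) * E 0 \<omega>)"
        using XB[of \<omega>] rho1 by (simp add: algebra_simps)
      then show "X 0 \<omega> \<le> R0 / rho + (4 * \<tau>\<^sup>2) * E 0 \<omega>" using rho1 by simp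
    qed
    also have "\<dots> \<le> ennreal (R0 / rho + (4 * \<tau>\<^sup>2) * \<sigma>\<^sup>2)"
      by (rule nn_integral_affine_le[OF Pprob E_meas Enn _ _ Ebound]) (use R0_nn rho1 in auto)
    also have "\<dots> \<le> ennreal (R0 / rho ^ (Suc 0) + M)"
    proof (intro ennreal_leI)
      have "0 \<le> K * \<tau> * \<delta>\<^sup>2 / \<mu>" using tau Kpos mu_L by simp
      moreover have "4 * (\<tau>\<^sup>2 * \<sigma>\<^sup>2) \<le> (16 * K + 8) * (\<tau>\<^sup>2 * \<sigma>\<^sup>2)"
        using Kpos by (intro mult_right_mono) auto
      ultimately show "R0 / rho + 4 * \<tau>\<^sup>2 * \<sigma>\<^sup>2 \<le> R0 / rho ^ Suc 0 + M"
        by (simp add: M_def algebra_simps)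
    qed
    finally show ?case .
  next
    case (Suc k)
    have "(\<integral>\<^sup>+ \<omega>. ennreal (rho * X (Suc k) \<omega>) \<partial>?P)
        = (\<integral>\<^sup>+ \<omega>. (\<integral>\<^sup>+ \<xi>. ennreal (rho * X (Suc k) (fun_upd \<omega> (Suc k) \<xi>)) \<partial>D) \<partial>?P)"
      by (rule nn_integral_split_coord[OF D]) measurable
    also have "\<dots> \<le> (\<integral>\<^sup>+ \<omega>. (ennreal (X k \<omega>) + ennreal (c1 + (4 * \<tau>\<^sup>2) * E k \<omega>)) \<partial>?P)"
    proof (rule nn_integral_mono)
      fix \<omega>
      have "ennreal (X k \<omega> + 4 * \<tau>\<^sup>2 * E k \<omega> + c1) = ennreal (X k \<omega>) + ennreal (c1 + (4 * \<tau>\<^sup>2) * E k \<omega>)"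
        using Xnn[of k \<omega>] Enn[of k \<omega>] c1_nn by (simp add: ennreal_plus[symmetric] algebra_simps del: ennreal_plus)
      then show "(\<integral>\<^sup>+ \<xi>. ennreal (rho * X (Suc k) (fun_upd \<omega> (Suc k) \<xi>)) \<partial>D)
          \<le> ennreal (X k \<omega>) + ennreal (c1 + (4 * \<tau>\<^sup>2) * E k \<omega>)"
        using inner[of k \<omega>] by simp
    qed
    also have "\<dots> = (\<integral>\<^sup>+ \<omega>. ennreal (X k \<omega>) \<partial>?P) + (\<integral>\<^sup>+ \<omega>. ennreal (c1 + (4 * \<tau>\<^sup>2) * E k \<omega>) \<partial>?P)"
      by (rule nn_integral_add) measurable
    also have "\<dots> \<le> ennreal (R0 / rho ^ (Suc k) + M) + ennreal (c1 + (4 * \<tau>\<^sup>2) * \<sigma>\<^sup>2)"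
      by (intro add_mono Suc.IH nn_integral_affine_le[OF Pprob E_meas Enn _ _ Ebound]) (use c1_nn in auto)
    also have "\<dots> = ennreal (R0 / rho ^ (Suc k) + M + c)"
      using R0_nn rho1 M_nn c1_nn by (simp add: c_def ennreal_plus[symmetric] algebra_simps del: ennreal_plus)
    finally have J: "(\<integral>\<^sup>+ \<omega>. ennreal (rho * X (Suc k) \<omega>) \<partial>?P) \<le> ennreal (R0 / rho ^ (Suc k) + M + c)" .
    have "(\<integral>\<^sup>+ \<omega>. ennreal (X (Suc k) \<omega>) \<partial>?P) = (\<integral>\<^sup>+ \<omega>. ennreal (1 / rho) * ennreal (rho * X (Suc k) \<omega>) \<partial>?P)"
      using rho1 Xnn by (intro nn_integral_cong) (simp add: ennreal_mult[symmetric] del: ennreal_mult)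
    also have "\<dots> = ennreal (1 / rho) * (\<integral>\<^sup>+ \<omega>. ennreal (rho * X (Suc k) \<omega>) \<partial>?P)"
      by (rule nn_integral_cmult) measurable
    also have "\<dots> \<le> ennreal (1 / rho) * ennreal (R0 / rho ^ (Suc k) + M + c)"
      by (rule mult_left_mono[OF J]) simp
    also have "\<dots> = ennreal (1 / rho * (R0 / rho ^ (Suc k) + M + c))"
    proof (rule ennreal_mult[symmetric])
      show "0 \<le> 1 / rho" using rho1 by simp
      show "0 \<le> R0 / rho ^ (Suc k) + M + c" using rho1 R0_nn M_nn c1_nn tau by (simp add: c_def)
    qed
    also have "\<dots> = ennreal ((R0 / rho ^ (Suc k) + M + c) / rho)" by simp
    also have "\<dots> \<le> ennreal (R0 / rho ^ (Suc (Suc k)) + M)"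
    proof (rule ennreal_leI)
      have "M + c \<le> rho * M" using cM by (simp add: algebra_simps)
      then have "(M + c) / rho \<le> M" using rho1 by (simp add: field_simps)
      moreover have "(R0 / rho ^ (Suc k) + M + c) / rho = R0 / rho ^ (Suc (Suc k)) + (M + c) / rho"
        using rho1 by (simp add: field_simps)
      ultimately show "(R0 / rho ^ (Suc k) + M + c) / rho \<le> R0 / rho ^ (Suc (Suc k)) + M" by simp
    qed
    finally show ?case .
  qed
  have tgt_nn: "0 \<le> ((L / \<mu>) / \<theta> + 1) * 32 * \<tau>\<^sup>2 * \<sigma>\<^sup>2" "0 \<le> 2 * (L / \<mu>) * \<alpha> * \<delta>\<^sup>2 / (\<theta> * \<mu>)"
    using Kpos params mu_L Lpos by (simp_all add: K_def[symmetric])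
  show ?thesis
  proof (cases k)
    case 0
    have "em_z Z Fh \<alpha> \<gamma> \<tau> z0 k \<omega> = z0" for \<omega> by (simp add: em_z_def 0)
    then have "(\<integral>\<^sup>+ \<omega>. ennreal ((norm (em_z Z Fh \<alpha> \<gamma> \<tau> z0 k \<omega> - zstar))\<^sup>2) \<partial>?P) = ennreal R0"
      by (simp add: R0_def P.emeasure_space_1)
    also have "\<dots> \<le> ennreal (2 * (norm (z0 - zstar))\<^sup>2 / (1 + \<theta> / (L / \<mu>)) ^ k
                    + ((L / \<mu>) / \<theta> + 1) * 32 * \<tau>\<^sup>2 * \<sigma>\<^sup>2
                    + 2 * (L / \<mu>) * \<alpha> * \<delta>\<^sup>2 / (\<theta> * \<mu>))"
      using tgt_nn R0_nn by (intro ennreal_leI) (simp add: 0 R0_def)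
    finally show ?thesis .
  next
    case (Suc k')
    have "em_z Z Fh \<alpha> \<gamma> \<tau> z0 k \<omega> = zz (Suc k') \<omega>" for \<omega> by (simp add: em_z_def zz_def it_def Suc)
    then have "(\<integral>\<^sup>+ \<omega>. ennreal ((norm (em_z Z Fh \<alpha> \<gamma> \<tau> z0 k \<omega> - zstar))\<^sup>2) \<partial>?P)
       = (\<integral>\<^sup>+ \<omega>. ennreal ((norm (zz (Suc k') \<omega> - zstar))\<^sup>2) \<partial>?P)" by simp
    also have "\<dots> \<le> (\<integral>\<^sup>+ \<omega>. ennreal 2 * ennreal (X k' \<omega>) \<partial>?P)"
    proof (intro nn_integral_mono)
      fix \<omega>
      have "ennreal ((norm (zz (Suc k') \<omega> - zstar))\<^sup>2) \<le> ennreal (2 * X k' \<omega>)"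
        by (rule ennreal_leI, rule Xlo)
      also have "\<dots> = ennreal 2 * ennreal (X k' \<omega>)" using Xnn[of k' \<omega>] by (simp add: ennreal_mult)
      finally show "ennreal ((norm (zz (Suc k') \<omega> - zstar))\<^sup>2) \<le> ennreal 2 * ennreal (X k' \<omega>)" .
    qed
    also have "\<dots> = ennreal 2 * (\<integral>\<^sup>+ \<omega>. ennreal (X k' \<omega>) \<partial>?P)"
      by (rule nn_integral_cmult) measurable
    also have "\<dots> \<le> ennreal 2 * ennreal (R0 / rho ^ (Suc k') + M)"
      by (rule mult_left_mono[OF main]) simp
    also have "\<dots> = ennreal (2 * (R0 / rho ^ (Suc k') + M))"
      by (rule ennreal_mult[symmetric]) (use R0_nn M_nn rho1 in auto)
    also have "\<dots> = ennreal (2 * (R0 / rho ^ k + M))" by (simp add: Suc)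
    also have "\<dots> \<le> ennreal (2 * (norm (z0 - zstar))\<^sup>2 / (1 + \<theta> / (L / \<mu>)) ^ k
                    + ((L / \<mu>) / \<theta> + 1) * 32 * \<tau>\<^sup>2 * \<sigma>\<^sup>2
                    + 2 * (L / \<mu>) * \<alpha> * \<delta>\<^sup>2 / (\<theta> * \<mu>))"
    proof (rule ennreal_leI)
      have e1: "2 * (L / \<mu>) * \<alpha> * \<delta>\<^sup>2 / (\<theta> * \<mu>) = 2 * K * \<alpha> * \<delta>\<^sup>2 / \<mu>"
        by (simp add: K_def field_simps)
      have e2: "2 * (norm (z0 - zstar))\<^sup>2 / (1 + \<theta> / (L / \<mu>)) ^ k = 2 * (R0 / rho ^ k)"
        by (simp add: R0_def rho_def)
      have ta: "K * \<tau> * \<delta>\<^sup>2 / \<mu> \<le> K * \<alpha> * \<delta>\<^sup>2 / \<mu>"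
      proof -
        have "\<tau> \<le> \<alpha>" using al rho1 tau by simp
        then have "K * \<tau> * \<delta>\<^sup>2 \<le> K * \<alpha> * \<delta>\<^sup>2" using Kpos by (intro mult_right_mono mult_left_mono) auto
        then show ?thesis using mu_L by (simp add: divide_right_mono)
      qed
      show "2 * (R0 / rho ^ k + M) \<le> 2 * (norm (z0 - zstar))\<^sup>2 / (1 + \<theta> / (L / \<mu>)) ^ k
                    + ((L / \<mu>) / \<theta> + 1) * 32 * \<tau>\<^sup>2 * \<sigma>\<^sup>2
                    + 2 * (L / \<mu>) * \<alpha> * \<delta>\<^sup>2 / (\<theta> * \<mu>)"
      proof -
        have f1: "2 * (R0 / rho ^ k + M) = 2 * (R0 / rho ^ k) + 2 * (K * \<tau> * \<delta>\<^sup>2 / \<mu>) + (32 * K + 16) * (\<tau>\<^sup>2 * \<sigma>\<^sup>2)"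
          by (simp add: M_def algebra_simps)
        have f2: "((L / \<mu>) / \<theta> + 1) * 32 * \<tau>\<^sup>2 * \<sigma>\<^sup>2 = (32 * K + 32) * (\<tau>\<^sup>2 * \<sigma>\<^sup>2)"
          by (simp add: K_def algebra_simps)
        have f3: "2 * K * \<alpha> * \<delta>\<^sup>2 / \<mu> = 2 * (K * \<alpha> * \<delta>\<^sup>2 / \<mu>)" by simp
        have f4: "(32 * K + 16) * (\<tau>\<^sup>2 * \<sigma>\<^sup>2) \<le> (32 * K + 32) * (\<tau>\<^sup>2 * \<sigma>\<^sup>2)"
          by (intro mult_right_mono) auto
        show ?thesis unfolding e1 e2 f1 f2 f3 using ta f4 by linarith
      qed
    qed
    finally show ?thesis .
  qed
qed


end
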